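(* Let $n_1,n_2\ge2$, $\tau\neq0$ real, $N'=(n_1+1)n_2$, $Q=K(n_1+1,n_2,0,\tau)$ and $e_1=(1,0,\dots,0)\in\mathbb{R}^{N'}$ (row vector). Then: (i) If $n_2$ is even, for every positive integer $s$ the vectors $e_1Q^s,e_1Q^{s+1},\dots,e_1Q^{s+N'-1}$ are linearly independent. (ii) If $n_2$ is odd, let $s\ge N'$, $\Lambda=\{e_1Q^2,\dots,e_1Q^{N'-1}\}$, $\Lambda_s=\Lambda\cup\{e_1Q^s\}$, and let $\bar M(s)$ be the matrix whose rows are $e_1Q^2,\dots,e_1Q^{N'-1},e_1Q^s$ in this order, with columns $\bar{\mathfrak C}_1(s),\dots,\bar{\mathfrak C}_{N'}(s)$. Then (a) $\Lambda$ is linearly independent while $\Lambda_s$ is linearly dependent; (b) $\bar{\mathfrak C}_1(s)$ lies in the span of the odd columns $\bar{\mathfrak C}_3(s),\bar{\mathfrak C}_5(s),\dots,\bar{\mathfrak C}_{n_2}(s)$; (c) $\bar{\mathfrak C}_{n_2+1}(s)$ lies in the span of the columns $\bar{\mathfrak C}_{n_2+3}(s),\bar{\mathfrak C}_{n_2+5}(s),\dots,\bar{\mathfrak C}_{2n_2}(s)$.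
   Context: Modified Kac matrix: for $m\ge1$, $y\in\mathbb{R}$, $\mathcal K(m,y)=(k_{ij})_{1\le i,j\le m}$ with $k_{i,i-1}=(m-i+1)y$, $k_{i,i+1}=i$, other entries $0$. Modified Kac matrix of second type: $K(m_1,m_2,x,y)$ is the $m_1m_2\times m_1m_2$ matrix of $m_2\times m_2$ blocks $K_{ij}$, $1\le i,j\le m_1$, with $K_{ii}=\mathcal K(m_2,y)$, $K_{i,i-1}=(m_1-i+1)x\,\mathcal I_{m_2}$, $K_{i,i+1}=i\,\mathcal I_{m_2}$, all other blocks zero. Thus $K(n_1+1,n_2,0,\tau)$ has diagonal blocks $\mathcal K(n_2,\tau)$, superdiagonal blocks $i\,\mathcal I_{n_2}$ and zero subdiagonal blocks. *)

theory Defs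
  imports "Jordan_Normal_Form.Matrix"
begin

text \<open>Matrices are 0-indexed in JNF. The paper's 1-indexed entry (i,j) is entry (i-1,j-1) here.\<close>

text \<open>Modified Kac matrix: k_{i,i-1} = (m-i+1) y, k_{i,i+1} = i (1-indexed).\<close>
definition kac :: "nat \<Rightarrow> real \<Rightarrow> real mat" where
  "kac m y = mat m m (\<lambda>(i,j).
      if j + 1 = i then real (m - i) * y
      else if j = i + 1 then real (i + 1)
      else 0)"

definition kac2 :: "nat \<Rightarrow> nat \<Rightarrow> real \<Rightarrow> real \<Rightarrow> real mat" where
  "kac2 m1 m2 x y = mat (m1 * m2) (m1 * m2) (\<lambda>(p,q).
      let bi = p div m2; a = p mod m2; bj = q div m2; b = q mod m2 in
      if bi = bj then kac m2 y $$ (a, b)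
      else if bj + 1 = bi then (if a = b then real (m1 - bi) * x else 0)
      else if bj = bi + 1 then (if a = b then real (bi + 1) else 0)
      else 0)"

definition lin_indep_list :: "nat \<Rightarrow> real vec list \<Rightarrow> bool" where
  "lin_indep_list n vs \<longleftrightarrow>
     (\<forall>c :: nat \<Rightarrow> real. (\<forall>k<n. (\<Sum>i<length vs. c i * (vs ! i) $ k) = 0)
        \<longrightarrow> (\<forall>i<length vs. c i = 0))"

definition in_span_list :: "nat \<Rightarrow> real vec \<Rightarrow> real vec list \<Rightarrow> bool" where
  "in_span_list n v ws \<longleftrightarrow>
     (\<exists>c :: nat \<Rightarrow> real. \<forall>k<n. v $ k = (\<Sum>i<length ws. c i * (ws ! i) $ k))"

definition e1Q :: "real mat \<Rightarrow> nat \<Rightarrow> real vec" where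
  "e1Q Q s = row (mat_of_row (unit_vec (dim_row Q) 0) * (Q ^\<^sub>m s)) 0"

end

theory Submission
  imports Defs "Jordan_Normal_Form.Determinant" "HOL-Computational_Algebra.Polynomial"
begin



definition Kc :: "nat \<Rightarrow> 'a::comm_ring_1 \<Rightarrow> nat \<Rightarrow> nat \<Rightarrow> 'a" where
 "Kc n y i j = (if j + 1 = i then of_nat (n - i) * y else if j = i + 1 then of_nat (i+1) else 0)"

lemma kac_entry: "i < n \<Longrightarrow> j < n \<Longrightarrow> kac n y $$ (i,j) = Kc n y i j"
  by (simp add: kac_def Kc_def)

lemma kac2_carrier: "kac2 m n x y \<in> carrier_mat (m*n) (m*n)"
  by (simp add: kac2_def)

lemma idx_lt: "a < n \<Longrightarrow> b < m \<Longrightarrow> b*n+a < m*(n::nat)"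
proof -
  assume "a < n" "b < m"
  then have "(b+1)*n \<le> m*n" by (intro mult_le_mono1) simp
  then show ?thesis using \<open>a < n\<close> by simp
qed

lemma kac2_dim[simp]: "dim_row (kac2 m n x y) = m*n" "dim_col (kac2 m n x y) = m*n"
  by (simp_all add: kac2_def)

lemma kac2_entry:
  assumes "a < n" "i < n" "b < m" "j < m"
  shows "kac2 m n 0 y $$ (b*n+a, j*n+i) =
    (if b = j then Kc n y a i else if j = b + 1 \<and> a = i then real (b+1) else 0)"
proof -
  have n: "n > 0" using assms by auto
  have l1: "b*n+a < m*n" using assms by (simp add: idx_lt)
  have l2: "j*n+i < m*n" using assms by (simp add: idx_lt)
  have d: "(b*n+a) div n = b" "(b*n+a) mod n = a" "(j*n+i) div n = j" "(j*n+i) mod n = i"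
    using assms by auto
  have "kac2 m n 0 y $$ (b*n+a, j*n+i) = (if b = j then kac n y $$ (a, i)
      else if j + 1 = b then (if a = i then real (m - b) * 0 else 0)
      else if j = b + 1 then (if a = i then real (b + 1) else 0)
      else 0)" unfolding kac2_def index_mat(1)[OF l1 l2] case_prod_conv Let_def d by (rule refl)
  then show ?thesis using assms by (simp add: kac_entry Let_def)
qed

lemma sum_blocks: "(\<Sum>p<(m::nat)*n. f p) = (\<Sum>b<m. \<Sum>a<n. f (b*n+a))"
proof (induction m)
  case 0 then show ?case by simp
next
  case (Suc m)
  have "(\<Sum>p<Suc m*n. f p) = (\<Sum>p\<in>{0..<m*n}. f p) + (\<Sum>p\<in>{m*n..<m*n+n}. f p)"
    unfolding lessThan_atLeast0 mult_Suc add.commute[of n "m*n"] by (subst sum.atLeastLessThan_concat) simp_all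
  also have "(\<Sum>p\<in>{m*n..<m*n+n}. f p) = (\<Sum>a\<in>{0..<n}. f (a+m*n))"
    using sum.shift_bounds_nat_ivl[of f 0 "m*n" n] by (simp add: add.commute)
  finally show ?case using Suc by (simp add: lessThan_atLeast0 add.commute)
qed

lemma pow_entry:
  assumes "Q \<in> carrier_mat N N" "q < N"
  shows "(Q ^\<^sub>m Suc t) $$ (0,q) = (\<Sum>p<N. (Q ^\<^sub>m t) $$ (0,p) * Q $$ (p,q))"
proof -
  have N: "0 < N" using assms by auto
  have c: "Q ^\<^sub>m t \<in> carrier_mat N N" using assms by auto
  have "(Q ^\<^sub>m Suc t) $$ (0,q) = (Q ^\<^sub>m t * Q) $$ (0,q)" by simp
  also have "\<dots> = row (Q ^\<^sub>m t) 0 \<bullet> col Q q"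
    using c assms N by (intro index_mult_mat(1)) auto
  also have "\<dots> = (\<Sum>p\<in>{0..<N}. row (Q ^\<^sub>m t) 0 $ p * col Q q $ p)"
    unfolding scalar_prod_def using assms by simp
  also have "\<dots> = (\<Sum>p<N. (Q ^\<^sub>m t) $$ (0,p) * Q $$ (p,q))"
    using c assms N by (intro sum.cong) auto
  finally show ?thesis .
qed

fun u :: "nat \<Rightarrow> real \<Rightarrow> nat \<Rightarrow> nat \<Rightarrow> real" where
  "u n y 0 i = (if i = 0 then 1 else 0)"
| "u n y (Suc r) i = (\<Sum>i'<n. u n y r i' * Kc n y i' i)"

lemma sum_if2:
  assumes "j < (m::nat)"
  shows "(\<Sum>b<m. (if b = j then X else if j = b + 1 then Y b else 0)) = X + (if 0 < j then Y (j-1) else (0::real))"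
proof -
  have "(\<Sum>b<m. (if b = j then X else if j = b + 1 then Y b else 0)) =
     (\<Sum>b<m. (if b = j then X else 0) + (if j = b + 1 then Y b else 0))"
    by (rule sum.cong) auto
  also have "\<dots> = X + (\<Sum>b<m. (if j = b + 1 then Y b else 0))"
    using assms by (simp add: sum.distrib)
  also have "(\<Sum>b<m. (if j = b + 1 then Y b else 0)) = (if 0 < j then Y (j-1) else 0)"
  proof (cases j)
    case (Suc j')
    then have "(\<Sum>b<m. (if j = b + 1 then Y b else 0)) = (\<Sum>b<m. (if b = j' then Y b else 0))"
      by (intro sum.cong) auto
    then show ?thesis using Suc assms by simp
  qed simp
  finally show ?thesis .
qed

lemma arith_step:
  fixes U :: real
  assumes "j = Suc j'"
  shows "real (t choose j) * fact j * U + real (t choose j') * fact j' * U * real j = real (Suc t choose j) * fact j * U"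
proof -
  have c: "real (Suc t choose j) = real (t choose j') + real (t choose j)" using assms by simp
  have f: "(fact j :: real) = real j * fact j'" using assms by simp
  show ?thesis unfolding c f by (simp add: algebra_simps)
qed

lemma block:
  assumes "n > 0" "j < m" "i < n"
  shows "(kac2 m n 0 y ^\<^sub>m t) $$ (0, j*n+i) = real (t choose j) * fact j * u n y (t-j) i"
  using assms
proof (induction t arbitrary: j i)
  case 0
  have "j*n+i < m*n" using 0 by (simp add: idx_lt)
  then show ?case using 0 by (cases j) (auto simp: one_mat_def)
next
  case (Suc t)
  let ?Q = "kac2 m n 0 y"
  let ?W = "\<lambda>p. (?Q ^\<^sub>m t) $$ (0,p)"
  have lt: "j*n+i < m*n" using Suc by (simp add: idx_lt)
  have "(?Q ^\<^sub>m Suc t) $$ (0, j*n+i) = (\<Sum>p<m*n. ?W p * ?Q $$ (p, j*n+i))"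
    by (rule pow_entry[OF kac2_carrier lt])
  also have "\<dots> = (\<Sum>b<m. \<Sum>a<n. ?W (b*n+a) * ?Q $$ (b*n+a, j*n+i))"
    by (rule sum_blocks)
  also have "\<dots> = (\<Sum>b<m. (if b = j then (\<Sum>a<n. ?W (j*n+a) * Kc n y a i)
       else if j = b + 1 then ?W (b*n+i) * real (b+1) else 0))"
  proof (rule sum.cong[OF refl])
    fix b assume b: "b \<in> {..<m}"
    have "(\<Sum>a<n. ?W (b*n+a) * ?Q $$ (b*n+a, j*n+i)) =
       (\<Sum>a<n. ?W (b*n+a) * (if b = j then Kc n y a i else if j = b + 1 \<and> a = i then real (b+1) else 0))"
      using b Suc.prems by (intro sum.cong refl) (simp add: kac2_entry)
    also have "\<dots> = (if b = j then (\<Sum>a<n. ?W (j*n+a) * Kc n y a i)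
       else if j = b + 1 then ?W (b*n+i) * real (b+1) else 0)"
    proof (cases "b = j")
      case True then show ?thesis by simp
    next
      case False
      show ?thesis
      proof (cases "j = b + 1")
        case True
        have "(\<Sum>a<n. ?W (b*n+a) * (if b = j then Kc n y a i else if j = b + 1 \<and> a = i then real (b+1) else 0))
           = (\<Sum>a<n. (if a = i then ?W (b*n+a) * real (b+1) else 0))"
          using True False by (intro sum.cong) auto
        then show ?thesis using True False Suc.prems by simp
      qed (use False in simp)
    qed
    finally show "(\<Sum>a<n. ?W (b*n+a) * ?Q $$ (b*n+a, j*n+i)) = \<dots>" .
  qed
  also have "\<dots> = (\<Sum>a<n. ?W (j*n+a) * Kc n y a i) + (if 0 < j then ?W ((j-1)*n+i) * real j else 0)"
    using Suc.prems by (subst sum_if2) auto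
  also have "\<dots> = real (Suc t choose j) * fact j * u n y (Suc t - j) i"
  proof (cases j)
    case 0
    have "(\<Sum>a<n. ?W (j*n+a) * Kc n y a i) = (\<Sum>a<n. u n y t a * Kc n y a i)"
      using Suc.IH[of 0] Suc.prems 0 by (intro sum.cong) auto
    then show ?thesis using 0 by simp
  next
    case (Suc j')
    have A: "(\<Sum>a<n. ?W (j*n+a) * Kc n y a i) = real (t choose j) * fact j * (\<Sum>a<n. u n y (t-j) a * Kc n y a i)"
      using Suc.IH Suc.prems by (simp add: sum_distrib_left mult.assoc)
    have B: "?W ((j-1)*n+i) = real (t choose j') * fact j' * u n y (t-j') i"
      using Suc.IH[of j' i] Suc.prems \<open>j = Suc j'\<close> by simp
    show ?thesis
    proof (cases "t < j")
      case True
      then have z: "t choose j = 0" by simp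
      show ?thesis
      proof (cases "t = j'")
        case True
        then show ?thesis using A B z \<open>j = Suc j'\<close> by simp
      next
        case False
        then have "t < j'" using \<open>t < j\<close> \<open>j = Suc j'\<close> by auto
        then show ?thesis using A B z \<open>j = Suc j'\<close> by (simp add: binomial_eq_0)
      qed
    next
      case False
      then have e: "Suc t - j = Suc (t - j)" "t - j' = Suc (t-j)" using \<open>j = Suc j'\<close> by auto
      have U: "(\<Sum>a<n. u n y (t-j) a * Kc n y a i) = u n y (Suc t - j) i" unfolding e by simp
      have "(\<Sum>a<n. ?W (j*n+a) * Kc n y a i) + (if 0 < j then ?W ((j-1)*n+i) * real j else 0)
         = real (t choose j) * fact j * u n y (Suc t - j) i + real (t choose j') * fact j' * u n y (Suc t - j) i * real j"
        using A B U e \<open>j = Suc j'\<close> by simp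
      also have "\<dots> = real (Suc t choose j) * fact j * u n y (Suc t - j) i"
        by (rule arith_step[OF \<open>j = Suc j'\<close>])
      finally show ?thesis .
    qed
  qed
  finally show ?case .
qed




lemma e1Q_entry:
  assumes "Q \<in> carrier_mat N N" "q < N"
  shows "e1Q Q s $ q = (Q ^\<^sub>m s) $$ (0,q)"
proof -
  have N: "0 < N" using assms by auto
  have c: "Q ^\<^sub>m s \<in> carrier_mat N N" using assms by auto
  have "e1Q Q s $ q = (mat_of_row (unit_vec N 0) * (Q ^\<^sub>m s)) $$ (0,q)"
    unfolding e1Q_def using assms c by simp
  also have "\<dots> = unit_vec N 0 \<bullet> col (Q ^\<^sub>m s) q"
    using assms c by simp
  also have "\<dots> = (Q ^\<^sub>m s) $$ (0,q)"
    using assms c N by simp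
  finally show ?thesis .
qed

lemma Kc_sum:
  fixes g :: "nat \<Rightarrow> 'a::comm_ring_1"
  assumes "i' < n"
  shows "(\<Sum>i<n. Kc n y i' i * g i) =
    (if 0 < i' then of_nat (n-i') * y * g (i'-1) else 0) + (if i'+1 < n then of_nat (i'+1) * g (i'+1) else 0)"
proof -
  have "(\<Sum>i<n. Kc n y i' i * g i) = (\<Sum>i<n. (if i = i' - 1 \<and> 0 < i' then of_nat (n-i') * y * g i else 0)
     + (if i = i'+1 then of_nat (i'+1) * g i else 0))"
    by (intro sum.cong) (auto simp: Kc_def)
  also have "\<dots> = (if 0 < i' then of_nat (n-i') * y * g (i'-1) else 0) + (if i'+1 < n then of_nat (i'+1) * g (i'+1) else 0)"
    using assms by (simp add: sum.distrib sum.delta)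
  finally show ?thesis .
qed

lemma of_real_Kc: "of_real (Kc n y i j) = Kc n (of_real y) i j"
  by (simp add: Kc_def)

lemma u_eig:
  fixes g :: "nat \<Rightarrow> 'a::{real_algebra_1, comm_ring_1}"
  assumes "n > 0" "\<And>i'. i' < n \<Longrightarrow> (\<Sum>i<n. of_real (Kc n y i' i) * g i) = l * g i'" "g 0 = 1"
  shows "(\<Sum>i<n. of_real (u n y r i) * g i) = l ^ r"
proof (induction r)
  case 0
  have "(\<Sum>i<n. of_real (u n y 0 i) * g i) = (\<Sum>i<n. if i = 0 then g i else 0)"
    by (intro sum.cong) auto
  then show ?case using assms by simp
next
  case (Suc r)
  have "(\<Sum>i<n. of_real (u n y (Suc r) i) * g i) = (\<Sum>i<n. \<Sum>i'<n. of_real (u n y r i') * (of_real (Kc n y i' i) * g i))"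
    by (simp add: sum_distrib_right mult.assoc)
  also have "\<dots> = (\<Sum>i'<n. of_real (u n y r i') * (\<Sum>i<n. of_real (Kc n y i' i) * g i))"
    by (subst sum.swap) (simp add: sum_distrib_left)
  also have "\<dots> = (\<Sum>i'<n. of_real (u n y r i') * (l * g i'))"
    using assms by simp
  also have "\<dots> = l * (\<Sum>i'<n. of_real (u n y r i') * g i')"
    by (simp add: sum_distrib_left mult_ac)
  also have "\<dots> = l * l ^ r" using Suc by simp
  finally show ?case by simp
qed

definition ev :: "complex \<Rightarrow> nat \<Rightarrow> nat \<Rightarrow> complex poly" where
  "ev a n k = [:1,-a:]^k * [:1,a:]^(n-1-k)"

lemma AB_pderiv_A: "[:1,-a:] * [:1,a:] * pderiv ([:1,-a:]^k) = smult (of_nat k) ([:1,-a:]^k * [:1,a:] * [:-a:])"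
proof (cases k)
  case 0 then show ?thesis by simp
next
  case (Suc k')
  have d: "pderiv ([:1,-a:]^k) = smult (of_nat k) ([:1,-a:]^k' * [:-a:])"
    unfolding Suc pderiv_power by (simp add: pderiv_pCons)
  show ?thesis using Suc unfolding d by (simp only: mult_smult_right power_Suc ac_simps)
qed

lemma AB_pderiv_B: "[:1,-a:] * [:1,a:] * pderiv ([:1,a:]^k) = smult (of_nat k) ([:1,a:]^k * [:1,-a:] * [:a:])"
proof (cases k)
  case 0 then show ?thesis by simp
next
  case (Suc k')
  have d: "pderiv ([:1,a:]^k) = smult (of_nat k) ([:1,a:]^k' * [:a:])"
    unfolding Suc pderiv_power by (simp add: pderiv_pCons)
  show ?thesis using Suc unfolding d by (simp only: mult_smult_right power_Suc ac_simps)
qed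




lemma ev_ident:
  assumes "k < n"
  shows "[:1,-a:] * [:1,a:] * pderiv (ev a n k) = ev a n k * [: a * (of_nat (n-1-k) - of_nat k), (- (a^2 * of_nat (n-1))) :]"
proof -
  let ?A = "[:1,-a:]" and ?B = "[:1,a:]" and ?q = "n-1-k"
  have "?A * ?B * pderiv (ev a n k) = (?A * ?B * pderiv (?A^k)) * ?B^?q + ?A^k * (?A * ?B * pderiv (?B^?q))"
    unfolding ev_def pderiv_mult by (simp only: ring_distribs mult_ac add_ac)
  also have "\<dots> = ev a n k * (smult (of_nat k) (?B * [:-a:]) + smult (of_nat ?q) (?A * [:a:]))"
    unfolding AB_pderiv_A AB_pderiv_B ev_def by (simp only: ring_distribs mult_ac mult_smult_right mult_smult_left)
  also have "smult (of_nat k) (?B * [:-a:]) + smult (of_nat ?q) (?A * [:a:]) = [: a * (of_nat (n-1-k) - of_nat k), (- (a^2 * of_nat (n-1))) :]"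
  proof -
    have e: "of_nat (n-1) = (of_nat k + of_nat ?q :: complex)" using assms by (simp flip: of_nat_add)
    show ?thesis unfolding e by (simp add: algebra_simps power2_eq_square)
  qed
  finally show ?thesis .
qed




lemma coeff_q2: "coeff ([:1,0,c:] * (p::complex poly)) i = coeff p i + (if 2 \<le> i then c * coeff p (i-2) else 0)"

proof -
  have "[:1,0,c:] * p = p + pCons 0 (pCons 0 (smult c p))" by (simp add: mult_pCons_left smult_1_left)
  then show ?thesis
    by (cases i; cases "i - 1") (auto simp: coeff_pCons)
qed

lemma coeff_l2: "coeff ((p::complex poly) * [:d0,d1:]) i = d0 * coeff p i + (if 1 \<le> i then d1 * coeff p (i-1) else 0)"
proof -
  have "p * [:d0,d1:] = smult d0 p + pCons 0 (smult d1 p)" by (simp add: mult_pCons_right)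
  then show ?thesis
    by (cases i) (auto simp: coeff_pCons)
qed

lemma ev_deg: "k < n \<Longrightarrow> degree (ev a n k) \<le> n - 1"
proof -
  assume "k < n"
  have "degree (ev a n k) \<le> degree ([:1,-a:]^k) + degree ([:1,a:]^(n-1-k))"
    unfolding ev_def by (rule degree_mult_le)
  also have "\<dots> \<le> k * 1 + (n-1-k) * 1"
    by (intro add_mono degree_power_le[THEN order_trans]) auto
  finally show ?thesis using \<open>k < n\<close> by simp
qed

lemma ev_coeff0: "coeff (ev a n k) 0 = 1"
  by (simp add: ev_def coeff_mult_0 coeff_0_power)

lemma ring_lemma1: "(A - B) * X * G + (L - X * A * G + X * B * G) = (L::complex)"
  by (simp add: algebra_simps)

lemma ev_eig:
  assumes "a^2 = complex_of_real y" "k < n" "i' < n"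
  shows "(\<Sum>i<n. of_real (Kc n y i' i) * coeff (ev a n k) i) = (a * (of_nat (n-1-k) - of_nat k)) * coeff (ev a n k) i'"
proof -
  let ?f = "ev a n k" and ?l = "a * (of_nat (n-1-k) - of_nat k)"
  define g where "g = coeff ?f"
  have gn: "g n = 0" unfolding g_def using ev_deg[OF assms(2), of a] assms(2)
    by (intro coeff_eq_0) simp
  have AB: "[:1,-a:] * [:1,a:] = [:1,0,-(a^2):]" by (simp add: power2_eq_square)
  have E: "[:1,0,-(a^2):] * pderiv ?f = ?f * [: ?l, (- (a^2 * of_nat (n-1))) :]"
    using ev_ident[OF assms(2), of a] unfolding AB .
  have C: "of_nat (Suc i') * g (Suc i') + (if 2 \<le> i' then - (a^2) * (of_nat (Suc (i'-2)) * g (Suc (i'-2))) else 0)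
      = ?l * g i' + (if 1 \<le> i' then - (a^2 * of_nat (n-1)) * g (i'-1) else 0)"
    using arg_cong[OF E, of "\<lambda>p. coeff p i'"] unfolding coeff_q2 coeff_l2 coeff_pderiv g_def .
  have L: "(\<Sum>i<n. of_real (Kc n y i' i) * g i) =
    (if 0 < i' then of_nat (n-i') * a^2 * g (i'-1) else 0) + of_nat (i'+1) * g (i'+1)"
  proof -
    have "(\<Sum>i<n. of_real (Kc n y i' i) * g i) = (\<Sum>i<n. Kc n (a^2) i' i * g i)"
      unfolding of_real_Kc assms(1) ..
    also have "\<dots> = (if 0 < i' then of_nat (n-i') * a^2 * g (i'-1) else 0) + (if i'+1 < n then of_nat (i'+1) * g (i'+1) else 0)"
      by (rule Kc_sum[OF assms(3)])
    also have "(if i'+1 < n then of_nat (i'+1) * g (i'+1) else 0) = of_nat (i'+1) * g (i'+1)"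
    proof (cases "i'+1 < n")
      case False
      then have "i'+1 = n" using assms(3) by simp
      then show ?thesis using gn by simp
    qed simp
    finally show ?thesis .
  qed
  show ?thesis
  proof (cases "i' = 0")
    case True
    then show ?thesis using L C unfolding g_def by simp
  next
    case False
    have s: "Suc (i'-2) = i' - 1" if "2 \<le> i'" using that by simp
    have C': "of_nat (Suc i') * g (Suc i') = ?l * g i' - a^2 * of_nat (n-1) * g (i'-1) + a^2 * of_nat (i'-1) * g (i'-1)"
    proof (cases "2 \<le> i'")
      case True
      then show ?thesis using C False s by (simp add: algebra_simps)
    next
      case False
      then have "i' = 1" using \<open>i' \<noteq> 0\<close> by simp
      then show ?thesis using C by (simp add: algebra_simps)
    qed
    have nn: "(of_nat (n-i') :: complex) = of_nat (n-1) - of_nat (i'-1)"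
      using False assms(3) by (simp add: of_nat_diff)
    have "(\<Sum>i<n. of_real (Kc n y i' i) * g i) = of_nat (n-i') * a^2 * g (i'-1) + of_nat (Suc i') * g (Suc i')"
      using L False by simp
    also have "\<dots> = (of_nat (n-1) - of_nat (i'-1)) * a^2 * g (i'-1) + (?l * g i' - a^2 * of_nat (n-1) * g (i'-1) + a^2 * of_nat (i'-1) * g (i'-1))"
      by (simp only: nn C')
    also have "\<dots> = ?l * g i'" by (rule ring_lemma1)
    finally show ?thesis unfolding g_def .
  qed
qed




lemma choose_step: "(t - j) * (t choose j) = Suc j * (t choose Suc j)"
  by (metis binomial_absorption binomial_absorb_comp)

lemma hpderiv_monom: "(pderiv ^^ j) (monom (c::complex) t) = monom (of_nat ((t choose j) * fact j) * c) (t - j)"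
proof (induction j)
  case 0 then show ?case by simp
next
  case (Suc j)
  have "(pderiv ^^ Suc j) (monom c t) = pderiv ((pderiv ^^ j) (monom c t))" by simp
  also have "\<dots> = monom (of_nat (t - j) * (of_nat ((t choose j) * fact j) * c)) (t - j - Suc 0)"
    unfolding Suc pderiv_monom by simp
  also have "of_nat (t - j) * (of_nat ((t choose j) * fact j) * c) = of_nat ((t choose Suc j) * fact (Suc j)) * c"
  proof -
    have "(t - j) * ((t choose j) * fact j) = (t choose Suc j) * fact (Suc j)"
      using choose_step[of t j] by (simp add: algebra_simps)
    then show ?thesis by (metis mult.assoc of_nat_mult)
  qed
  finally show ?case by simp
qed

lemma order_ge_derivs:
  fixes p :: "complex poly"
  assumes "p \<noteq> 0" "\<forall>j<m. poly ((pderiv ^^ j) p) x = 0"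
  shows "m \<le> order x p"
  using assms
proof (induction m arbitrary: p)
  case 0 then show ?case by simp
next
  case (Suc m)
  have r: "poly p x = 0" using Suc.prems(2)[rule_format, of 0] by simp
  have pd: "pderiv p \<noteq> 0"
  proof
    assume "pderiv p = 0"
    then have "degree p = 0" using pderiv_eq_0_iff by auto
    then obtain c where "p = [:c:]" by (metis degree_eq_zeroE)
    then show False using r Suc.prems(1) by simp
  qed
  have o: "order x p = Suc (order x (pderiv p))" by (rule order_pderiv[OF Suc.prems(1) r])
  have "\<forall>j<m. poly ((pderiv ^^ j) (pderiv p)) x = 0"
  proof (intro allI impI)
    fix j assume "j < m"
    then have "poly ((pderiv ^^ Suc j) p) x = 0" using Suc.prems(2) by blast
    then show "poly ((pderiv ^^ j) (pderiv p)) x = 0" by (simp only: funpow_Suc_right o_apply)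
  qed
  then have "m \<le> order x (pderiv p)" using Suc.IH pd by blast
  then show ?case using o by simp
qed

lemma sum_count_le: "finite S \<Longrightarrow> (\<Sum>x\<in>S. count M x) \<le> size M"
proof -
  assume f: "finite S"
  have "(\<Sum>x\<in>S. count M x) = (\<Sum>x\<in>S \<inter> set_mset M. count M x)"
    using f by (intro sum.mono_neutral_right) auto
  also have "\<dots> \<le> (\<Sum>x\<in>set_mset M. count M x)"
    by (intro sum_mono2) auto
  also have "\<dots> = size M" by (simp add: size_multiset_overloaded_eq)
  finally show ?thesis .
qed

lemma roots_count:
  fixes p :: "complex poly"
  assumes "p \<noteq> 0" "finite S" "\<forall>x\<in>S. m \<le> order x p"
  shows "card S * m \<le> degree p"
proof -
  have "card S * m = (\<Sum>x\<in>S. m)" by simp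
  also have "\<dots> \<le> (\<Sum>x\<in>S. order x p)" using assms by (intro sum_mono) auto
  also have "\<dots> = (\<Sum>x\<in>S. count (proots p) x)" using assms by simp
  also have "\<dots> \<le> size (proots p)" using assms by (intro sum_count_le)
  also have "\<dots> \<le> degree p" by (rule size_proots_le)
  finally show ?thesis .
qed




lemma deriv_zero:
  fixes c :: "nat \<Rightarrow> real" and t :: "nat \<Rightarrow> nat"
  assumes n: "0 < n" and a2: "a^2 = complex_of_real y" and k: "k < n" and j: "j < m"
   and H: "\<forall>q<m*n. (\<Sum>l<L. c l * (kac2 m n 0 y ^\<^sub>m t l) $$ (0,q)) = 0"
  shows "poly ((pderiv ^^ j) (\<Sum>l<L. monom (of_real (c l)) (t l))) (a * (of_nat (n-1-k) - of_nat k)) = 0"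
proof -
  define lam where "lam = a * (of_nat (n-1-k) - of_nat k)"
  define v where "v = coeff (ev a n k)"
  have E: "(\<Sum>l<L. c l * (real (t l choose j) * fact j * u n y (t l - j) i)) = 0" if i: "i < n" for i
  proof -
    have "j*n+i < m*n" using i j by (rule idx_lt)
    then have "(\<Sum>l<L. c l * (kac2 m n 0 y ^\<^sub>m t l) $$ (0,j*n+i)) = 0" using H by blast
    then show ?thesis using block[OF n j i] by simp
  qed
  have U: "(\<Sum>i<n. of_real (u n y r i) * v i) = lam ^ r" for r
    unfolding v_def lam_def
    by (rule u_eig[OF n]) (use ev_eig[OF a2 k] ev_coeff0 in auto)
  have "0 = (\<Sum>i<n. of_real (\<Sum>l<L. c l * (real (t l choose j) * fact j * u n y (t l - j) i)) * v i)"
    using E by simp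
  also have "\<dots> = (\<Sum>i<n. \<Sum>l<L. of_real (c l * (real (t l choose j) * fact j)) * (of_real (u n y (t l - j) i) * v i))"
    by (simp add: of_real_sum sum_distrib_right sum_distrib_left mult_ac)
  also have "\<dots> = (\<Sum>l<L. of_real (c l * (real (t l choose j) * fact j)) * (\<Sum>i<n. of_real (u n y (t l - j) i) * v i))"
    by (subst sum.swap) (simp add: sum_distrib_left)
  also have "\<dots> = (\<Sum>l<L. of_real (c l * (real (t l choose j) * fact j)) * lam ^ (t l - j))"
    unfolding U ..
  also have "\<dots> = poly ((pderiv ^^ j) (\<Sum>l<L. monom (of_real (c l)) (t l))) lam"
    by (simp add: higher_pderiv_sum hpderiv_monom poly_sum poly_monom mult_ac)
  finally show ?thesis unfolding lam_def by simp
qed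




lemma lam_inj:
  assumes "a \<noteq> 0"
  shows "inj_on (\<lambda>k. a * (of_nat (n-1-k) - of_nat k :: complex)) {..<n}"
proof (rule inj_onI)
  fix k k' assume k: "k \<in> {..<n}" and k': "k' \<in> {..<n}"
    and e: "a * (of_nat (n-1-k) - of_nat k) = a * (of_nat (n-1-k') - of_nat k' :: complex)"
  then have "(of_nat (n-1-k) - of_nat k :: complex) = of_nat (n-1-k') - of_nat k'" using assms by simp
  then have "(of_nat (n-1-k + k') :: complex) = of_nat (n-1-k' + k)"
    by (simp add: algebra_simps)
  then have "n-1-k + k' = n-1-k' + k" by (simp only: of_nat_eq_iff)
  then show "k = k'" using k k' by auto
qed

lemma no_relation:
  fixes c :: "nat \<Rightarrow> real" and t :: "nat \<Rightarrow> nat" and R :: "complex poly"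
  assumes n: "0 < n" and m: "0 < m" and y: "y \<noteq> 0"
    and H: "\<forall>q<m*n. (\<Sum>l<L. c l * (kac2 m n 0 y ^\<^sub>m t l) $$ (0,q)) = 0"
    and P: "(\<Sum>l<L. monom (of_real (c l)) (t l)) = monom 1 s * R"
    and nz: "0 < s \<Longrightarrow> even n"
    and deg: "degree R < m*n"
  shows "R = 0"
proof (rule ccontr)
  assume R: "R \<noteq> 0"
  define a where "a = csqrt (complex_of_real y)"
  have a2: "a^2 = complex_of_real y" unfolding a_def by simp
  have a0: "a \<noteq> 0" unfolding a_def using y by simp
  define S where "S = (\<lambda>k. a * (of_nat (n-1-k) - of_nat k :: complex)) ` {..<n}"
  have cS: "card S = n" unfolding S_def using card_image[OF lam_inj[OF a0, of n]] by simp
  have PR: "monom 1 s * R \<noteq> 0" using R by (simp add: monom_altdef)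
  have "\<forall>x\<in>S. m \<le> order x R"
  proof
    fix x assume "x \<in> S"
    then obtain k where k: "k < n" and x: "x = a * (of_nat (n-1-k) - of_nat k)" unfolding S_def by auto
    have "\<forall>j<m. poly ((pderiv ^^ j) (monom 1 s * R)) x = 0"
      using deriv_zero[OF n a2 k _ H] unfolding x P by blast
    then have o: "m \<le> order x (monom 1 s * R)" by (rule order_ge_derivs[OF PR])
    have "poly (monom 1 s) x \<noteq> 0"
    proof (cases s)
      case 0 then show ?thesis by (simp add: poly_monom)
    next
      case (Suc s')
      then have "even n" using nz by simp
      have "n - 1 - k \<noteq> k"
      proof
        assume "n - 1 - k = k"
        then have "n = Suc (2*k)" using k by simp
        then show False using \<open>even n\<close> by simp
      qed
      then have "(of_nat (n-1-k) - of_nat k :: complex) \<noteq> 0" by simp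
      then have "x \<noteq> 0" unfolding x using a0 by simp
      then show ?thesis by (simp add: poly_monom)
    qed
    then have "order x (monom 1 s) = 0" by (rule order_0I)
    then show "m \<le> order x R" using o order_mult[OF PR] by simp
  qed
  then have "card S * m \<le> degree R" using roots_count[OF R] unfolding S_def by blast
  then show False using cS deg by (simp add: mult.commute)
qed




definition zv :: "nat \<Rightarrow> real \<Rightarrow> nat \<Rightarrow> real" where
  "zv n y i = (if even i then real (((n-1) div 2) choose (i div 2)) * (-y)^(i div 2) else 0)"

lemma zv_even: "zv n y (2*j) = real (((n-1) div 2) choose j) * (-y)^j"
  by (simp add: zv_def)

lemma zv_ker:
  assumes "odd n" "i' < n"
  shows "(\<Sum>i<n. Kc n y i' i * zv n y i) = 0"
proof -
  define p where "p = (n-1) div 2"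
  have np: "n = 2*p+1" unfolding p_def using assms(1) by simp
  have S: "(\<Sum>i<n. Kc n y i' i * zv n y i) =
    (if 0 < i' then of_nat (n-i') * y * zv n y (i'-1) else 0) + (if i'+1 < n then of_nat (i'+1) * zv n y (i'+1) else 0)"
    by (rule Kc_sum[OF assms(2)])
  show ?thesis
  proof (cases "even i'")
    case True
    then have "odd (i'+1)" by simp
    moreover have "0 < i' \<Longrightarrow> odd (i'-1)" using True by simp
    ultimately show ?thesis unfolding S by (auto simp: zv_def)
  next
    case False
    then obtain k where k: "i' = 2*k+1" by (metis oddE)
    have lt: "i'+1 < n" using k assms np by simp
    have kp: "k < p" using lt k np by simp
    have e1: "i'-1 = 2*k" and e2: "i'+1 = 2*Suc k" using k by simp_all
    have z1: "zv n y (i'-1) = real (p choose k) * (-y)^k" unfolding e1 zv_even p_def ..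
    have z2: "zv n y (i'+1) = real (p choose Suc k) * (-y)^(Suc k)" unfolding e2 zv_even p_def ..
    have ni: "real (n - i') = 2 * real (p - k)" using k np kp by simp
    have cs: "real (p - k) * real (p choose k) = real (Suc k) * real (p choose Suc k)"
      using choose_step[of p k] by (metis of_nat_mult)
    have "of_nat (n-i') * y * zv n y (i'-1) + of_nat (i'+1) * zv n y (i'+1)
        = 2 * y * (-y)^k * (real (p - k) * real (p choose k) - real (Suc k) * real (p choose Suc k))"
      unfolding z1 z2 ni using k by (simp add: algebra_simps)
    also have "\<dots> = 0" unfolding cs by simp
    finally show ?thesis unfolding S using lt k by simp
  qed
qed

lemma zv0: "zv n y 0 = 1" by (simp add: zv_def)

lemma u_zv:
  assumes "odd n" "0 < r"
  shows "(\<Sum>i<n. u n y r i * zv n y i) = 0"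
proof -
  have n: "0 < n" using assms by (cases n) auto
  have "(\<Sum>i<n. of_real (u n y r i) * zv n y i) = (0::real) ^ r"
    by (rule u_eig[OF n]) (use zv_ker[OF assms(1)] zv0 in auto)
  then show ?thesis using assms by simp
qed

lemma sum_odd_split:
  "(\<Sum>i<2*(p::nat)+1. (g i :: 'a::comm_monoid_add)) = g 0 + (\<Sum>k<p. g (2*k+1)) + (\<Sum>k<p. g (2*k+2))"
proof (induction p)
  case 0 then show ?case by simp
next
  case (Suc p)
  have "(\<Sum>i<2*Suc p+1. g i) = (\<Sum>i<2*p+1. g i) + g (2*p+1) + g (2*p+2)"
    by (simp add: numeral_2_eq_2)
  then show ?case using Suc by (simp add: ac_simps)
qed

lemma u_rel:
  assumes "odd n" "0 < r"
  shows "u n y r 0 = (\<Sum>k<(n-1) div 2. (- zv n y (2*k+2)) * u n y r (2*k+2))"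
proof -
  define p where "p = (n-1) div 2"
  have np: "n = 2*p+1" unfolding p_def using assms(1) by simp
  have "0 = (\<Sum>i<2*p+1. u n y r i * zv n y i)" using u_zv[OF assms] np by simp
  also have "\<dots> = u n y r 0 + (\<Sum>k<p. u n y r (2*k+2) * zv n y (2*k+2))"
    unfolding sum_odd_split by (simp add: zv_def zv0)
  finally show ?thesis unfolding p_def[symmetric] by (simp add: sum_negf algebra_simps)
qed




lemma dep_lemma:
  fixes F :: "nat \<Rightarrow> nat \<Rightarrow> real" and w :: "nat \<Rightarrow> real"
  assumes n: "0 < n" "n < N"
    and R1: "\<And>l. l < N - 1 \<Longrightarrow> F l 0 = (\<Sum>k<p. w k * F l (2*k+2))" and b1: "\<And>k. k < p \<Longrightarrow> 2*k+2 < n"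
    and R2: "\<And>l. l < N - 1 \<Longrightarrow> F l n = (\<Sum>k<p. w k * F l (n+2*k+2))" and b2: "\<And>k. k < p \<Longrightarrow> n+2*k+2 < N"
  shows "\<exists>c. (\<forall>q<N. (\<Sum>l<N-1. c l * F l q) = 0) \<and> (\<exists>l<N-1. c l \<noteq> 0)"
proof -
  define idx where "idx r = (if r < n-1 then r+1 else r+2)" for r
  define f where "f r = vec (N-1) (\<lambda>l. F l (idx r))" for r
  define B where "B = mat\<^sub>r (N-1) (N-1) (\<lambda>r. if r = N-2 then 0\<^sub>v (N-1) else f r)"
  have BC: "B \<in> carrier_mat (N-1) (N-1)" unfolding B_def by simp
  have "det B = 0" unfolding B_def
    by (rule det_row_0) (use n in \<open>auto simp: f_def\<close>)
  then obtain v where v: "v \<in> carrier_vec (N-1)" "v \<noteq> 0\<^sub>v (N-1)" "B *\<^sub>v v = 0\<^sub>v (N-1)"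
    using det_0_iff_vec_prod_zero[OF BC] by blast
  define c where "c l = v $ l" for l
  have E: "(\<Sum>l<N-1. c l * F l (idx r)) = 0" if r: "r < N-2" for r
  proof -
    have "0 = (B *\<^sub>v v) $ r" using v r by simp
    also have "\<dots> = row B r \<bullet> v" using r BC by simp
    also have "\<dots> = (\<Sum>l\<in>{0..<N-1}. row B r $ l * v $ l)" unfolding scalar_prod_def using v by simp
    also have "\<dots> = (\<Sum>l<N-1. c l * F l (idx r))"
      using r by (intro sum.cong) (auto simp: B_def f_def c_def lessThan_atLeast0)
    finally show ?thesis by simp
  qed
  have E': "(\<Sum>l<N-1. c l * F l q) = 0" if q: "q < N" "q \<noteq> 0" "q \<noteq> n" for q
  proof (cases "q < n")
    case True
    then have "idx (q-1) = q" "q - 1 < N-2" using q n by (auto simp: idx_def)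
    then show ?thesis using E by metis
  next
    case False
    then have "idx (q-2) = q" "q - 2 < N-2" using q n by (auto simp: idx_def)
    then show ?thesis using E by metis
  qed
  have "\<forall>q<N. (\<Sum>l<N-1. c l * F l q) = 0"
  proof (intro allI impI)
    fix q assume q: "q < N"
    show "(\<Sum>l<N-1. c l * F l q) = 0"
    proof (cases "q = 0 \<or> q = n")
      case False then show ?thesis using E' q by blast
    next
      case True
      then show ?thesis
      proof
        assume "q = 0"
        have "(\<Sum>l<N-1. c l * F l 0) = (\<Sum>l<N-1. \<Sum>k<p. w k * (c l * F l (2*k+2)))"
          using R1 by (simp add: sum_distrib_left mult_ac)
        also have "\<dots> = (\<Sum>k<p. w k * (\<Sum>l<N-1. c l * F l (2*k+2)))"
          by (subst sum.swap) (simp add: sum_distrib_left)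
        also have "\<dots> = 0"
        proof (intro sum.neutral ballI)
          fix k assume "k \<in> {..<p}"
          then have "2*k+2 < n" using b1 by auto
          then have "(\<Sum>l<N-1. c l * F l (2*k+2)) = 0" using E' n by simp
          then show "w k * (\<Sum>l<N-1. c l * F l (2*k+2)) = 0" by simp
        qed
        finally show ?thesis using \<open>q = 0\<close> by simp
      next
        assume "q = n"
        have "(\<Sum>l<N-1. c l * F l n) = (\<Sum>l<N-1. \<Sum>k<p. w k * (c l * F l (n+2*k+2)))"
          using R2 by (simp add: sum_distrib_left mult_ac)
        also have "\<dots> = (\<Sum>k<p. w k * (\<Sum>l<N-1. c l * F l (n+2*k+2)))"
          by (subst sum.swap) (simp add: sum_distrib_left)
        also have "\<dots> = 0"
        proof (intro sum.neutral ballI)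
          fix k assume "k \<in> {..<p}"
          then have "n+2*k+2 < N" using b2 by auto
          then have "(\<Sum>l<N-1. c l * F l (n+2*k+2)) = 0" using E' n by simp
          then show "w k * (\<Sum>l<N-1. c l * F l (n+2*k+2)) = 0" by simp
        qed
        finally show ?thesis using \<open>q = n\<close> by simp
      qed
    qed
  qed
  moreover have "\<exists>l<N-1. c l \<noteq> 0"
  proof (rule ccontr)
    assume "\<not> (\<exists>l<N-1. c l \<noteq> 0)"
    then have "v = 0\<^sub>v (N-1)" using v(1) by (intro eq_vecI) (auto simp: c_def)
    then show False using v(2) by simp
  qed
  ultimately show ?thesis by blast
qed




lemma Q_blk0: "0 < n \<Longrightarrow> 0 < m \<Longrightarrow> i < n \<Longrightarrow> (kac2 m n 0 y ^\<^sub>m t) $$ (0, i) = u n y t i"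
  using block[of n 0 m i y t] by simp

lemma Q_blk1: "0 < n \<Longrightarrow> 1 < m \<Longrightarrow> i < n \<Longrightarrow> (kac2 m n 0 y ^\<^sub>m t) $$ (0, n + i) = real t * u n y (t - 1) i"
  using block[of n 1 m i y t] by simp

lemma Q_rel1:
  assumes "odd n" "0 < m" "0 < t"
  shows "(kac2 m n 0 y ^\<^sub>m t) $$ (0, 0) = (\<Sum>k<(n-1) div 2. (- zv n y (2*k+2)) * (kac2 m n 0 y ^\<^sub>m t) $$ (0, 2*k+2))"
proof -
  have n: "0 < n" using assms by (cases n) auto
  have b: "2*k+2 < n" if "k < (n-1) div 2" for k using that assms(1) by (elim oddE) auto
  show ?thesis using u_rel[OF assms(1,3), of y] Q_blk0[OF n assms(2)] b n by simp
qed

lemma Q_rel2: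
  assumes "odd n" "1 < m" "1 < t"
  shows "(kac2 m n 0 y ^\<^sub>m t) $$ (0, n) = (\<Sum>k<(n-1) div 2. (- zv n y (2*k+2)) * (kac2 m n 0 y ^\<^sub>m t) $$ (0, n+2*k+2))"
proof -
  have n: "0 < n" using assms by (cases n) auto
  have b: "2*k+2 < n" if "k < (n-1) div 2" for k using that assms(1) by (elim oddE) auto
  have "(kac2 m n 0 y ^\<^sub>m t) $$ (0, n) = real t * u n y (t-1) 0"
    using Q_blk1[OF n assms(2) n, of y t] by simp
  also have "\<dots> = real t * (\<Sum>k<(n-1) div 2. (- zv n y (2*k+2)) * u n y (t-1) (2*k+2))"
    using u_rel[OF assms(1), of "t-1" y] assms(3) by simp
  also have "\<dots> = (\<Sum>k<(n-1) div 2. (- zv n y (2*k+2)) * (kac2 m n 0 y ^\<^sub>m t) $$ (0, n+2*k+2))"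
    unfolding sum_distrib_left
  proof (intro sum.cong refl)
    fix k assume "k \<in> {..<(n-1) div 2}"
    then have "2*k+2 < n" using b by auto
    then have "(kac2 m n 0 y ^\<^sub>m t) $$ (0, n+(2*k+2)) = real t * u n y (t-1) (2*k+2)"
      by (rule Q_blk1[OF n assms(2)])
    then have "(kac2 m n 0 y ^\<^sub>m t) $$ (0, n+2*k+2) = real t * u n y (t-1) (2*k+2)"
      by (metis add.assoc)
    then show "real t * (- zv n y (2*k+2) * u n y (t-1) (2*k+2)) = - zv n y (2*k+2) * (kac2 m n 0 y ^\<^sub>m t) $$ (0, n+2*k+2)"
      by simp
  qed
  finally show ?thesis .
qed




theorem lemma6:
  fixes n1 n2 :: nat and \<tau> :: real
  assumes "n1 \<ge> 2" and "n2 \<ge> 2" and "\<tau> \<noteq> 0"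
  defines "N' \<equiv> (n1 + 1) * n2"
  defines "Q \<equiv> kac2 (n1 + 1) n2 0 \<tau>"
  shows
    "(even n2 \<longrightarrow>
       (\<forall>s::nat. s \<ge> 1 \<longrightarrow> lin_indep_list N' (map (\<lambda>k. e1Q Q (s + k)) [0..<N'])))
     \<and>
     (odd n2 \<longrightarrow> (\<forall>s::nat. s \<ge> N' \<longrightarrow>
       (let \<Lambda> = map (\<lambda>k. e1Q Q k) [2..<N'];
            M = mat_of_rows N' (\<Lambda> @ [e1Q Q s]);
            C = (\<lambda>j::nat. col M (j - 1))
        in lin_indep_list N' \<Lambda>
           \<and> \<not> lin_indep_list N' (\<Lambda> @ [e1Q Q s])
           \<and> in_span_list (N' - 1) (C 1) (map (\<lambda>k. C (2 * k + 1)) [1..<(n2 - 1) div 2 + 1])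
           \<and> in_span_list (N' - 1) (C (n2 + 1))
               (map (\<lambda>k. C (n2 + 1 + 2 * k)) [1..<(n2 - 1) div 2 + 1]))))"
proof -
  have n0: "0 < n2" using assms by simp
  have m0: "0 < n1+1" and m1: "1 < n1+1" using assms by simp_all
  have QC: "Q \<in> carrier_mat N' N'" unfolding Q_def N'_def by (rule kac2_carrier)
  have ent: "e1Q Q s $ q = (Q ^\<^sub>m s) $$ (0,q)" if "q < N'" for s q using e1Q_entry[OF QC that] .
  have N3: "3*n2 \<le> N'" unfolding N'_def using assms by (intro mult_le_mono1) simp
  have N0: "0 < N'" using N3 n0 by simp
  show ?thesis
  proof (intro conjI impI allI)
    fix s :: nat assume ev: "even n2" and s: "1 \<le> s"
    show "lin_indep_list N' (map (\<lambda>k. e1Q Q (s + k)) [0..<N'])"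
      unfolding lin_indep_list_def
    proof (intro allI impI)
      fix c :: "nat \<Rightarrow> real" and i
      assume H0: "\<forall>k<N'. (\<Sum>i<length (map (\<lambda>k. e1Q Q (s + k)) [0..<N']). c i * (map (\<lambda>k. e1Q Q (s + k)) [0..<N'] ! i) $ k) = 0"
        and i: "i < length (map (\<lambda>k. e1Q Q (s + k)) [0..<N'])"
      have H: "\<forall>q<(n1+1)*n2. (\<Sum>l<N'. c l * (Q ^\<^sub>m (s+l)) $$ (0,q)) = 0"
      proof (intro allI impI)
        fix q assume q: "q < (n1+1)*n2"
        then have q': "q < N'" unfolding N'_def .
        have "(\<Sum>l<N'. c l * (Q ^\<^sub>m (s+l)) $$ (0,q)) = (\<Sum>l<N'. c l * (map (\<lambda>k. e1Q Q (s + k)) [0..<N'] ! l) $ q)"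
          by (intro sum.cong refl) (simp add: ent[OF q'])
        then show "(\<Sum>l<N'. c l * (Q ^\<^sub>m (s+l)) $$ (0,q)) = 0" using H0 q' by simp
      qed
      define R where "R = (\<Sum>l<N'. monom (complex_of_real (c l)) l)"
      have P: "(\<Sum>l<N'. monom (complex_of_real (c l)) (s+l)) = monom 1 s * R"
        unfolding R_def by (simp add: sum_distrib_left mult_monom)
      have "degree R \<le> N' - 1" unfolding R_def
        by (intro degree_sum_le) (auto intro: order_trans[OF degree_monom_le])
      then have "degree R < N'" using N0 by linarith
      then have deg: "degree R < (n1+1)*n2" unfolding N'_def .
      have "R = 0" by (rule no_relation[OF n0 m0 assms(3) H[unfolded Q_def] P _ deg]) (use ev in simp)
      then have "coeff R i = 0" by simp
      moreover have "coeff R i = complex_of_real (c i)" using i unfolding R_def by (simp add: coeff_sum)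
      ultimately show "c i = 0" by simp
    qed
  next
    fix s :: nat assume od: "odd n2" and sN: "N' \<le> s"
    define \<Lambda> where "\<Lambda> = map (\<lambda>k. e1Q Q k) [2..<N']"
    define vs where "vs = \<Lambda> @ [e1Q Q s]"
    define M where "M = mat_of_rows N' vs"
    define p where "p = (n2 - 1) div 2"
    define T where "T l = (if l < N'-2 then l+2 else s)" for l
    have lenL: "length \<Lambda> = N' - 2" unfolding \<Lambda>_def by simp
    have lenv: "length vs = N' - 1" unfolding vs_def using lenL N3 n0 by simp
    have nthv: "vs ! l = e1Q Q (T l)" if "l < N' - 1" for l
      using that lenL unfolding vs_def T_def by (auto simp: nth_append \<Lambda>_def)
    have T1: "1 < T l" for l using sN N3 n0 unfolding T_def by auto
    have b1: "2*k+2 < n2" if "k < p" for k using that od unfolding p_def by (elim oddE) auto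
    have b2: "n2+2*k+2 < N'" if "k < p" for k using b1[OF that] N3 by simp
    have F0: "vs ! l $ 0 = (\<Sum>k<p. (- zv n2 \<tau> (2*k+2)) * vs ! l $ (2*k+2))" if l: "l < N' - 1" for l
    proof -
      have "vs ! l $ 0 = (Q ^\<^sub>m T l) $$ (0,0)" using nthv[OF l] ent N0 by simp
      also have "\<dots> = (\<Sum>k<p. (- zv n2 \<tau> (2*k+2)) * (Q ^\<^sub>m T l) $$ (0, 2*k+2))"
        unfolding Q_def p_def using Q_rel1[OF od m0] T1[of l] by simp
      also have "\<dots> = (\<Sum>k<p. (- zv n2 \<tau> (2*k+2)) * vs ! l $ (2*k+2))"
      proof (intro sum.cong refl)
        fix k assume "k \<in> {..<p}"
        then have "2*k+2 < N'" using b1[of k] N3 by simp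
        then show "(- zv n2 \<tau> (2*k+2)) * (Q ^\<^sub>m T l) $$ (0, 2*k+2) = (- zv n2 \<tau> (2*k+2)) * vs ! l $ (2*k+2)"
          using nthv[OF l] ent by simp
      qed
      finally show ?thesis .
    qed
    have Fn: "vs ! l $ n2 = (\<Sum>k<p. (- zv n2 \<tau> (2*k+2)) * vs ! l $ (n2+2*k+2))" if l: "l < N' - 1" for l
    proof -
      have "vs ! l $ n2 = (Q ^\<^sub>m T l) $$ (0,n2)" using nthv[OF l] ent N3 n0 by simp
      also have "\<dots> = (\<Sum>k<p. (- zv n2 \<tau> (2*k+2)) * (Q ^\<^sub>m T l) $$ (0, n2+2*k+2))"
        unfolding Q_def p_def using Q_rel2[OF od m1] T1[of l] by simp
      also have "\<dots> = (\<Sum>k<p. (- zv n2 \<tau> (2*k+2)) * vs ! l $ (n2+2*k+2))"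
      proof (intro sum.cong refl)
        fix k assume "k \<in> {..<p}"
        then have "n2+2*k+2 < N'" using b2[of k] by simp
        then show "(- zv n2 \<tau> (2*k+2)) * (Q ^\<^sub>m T l) $$ (0, n2+2*k+2) = (- zv n2 \<tau> (2*k+2)) * vs ! l $ (n2+2*k+2)"
          using nthv[OF l] ent by simp
      qed
      finally show ?thesis .
    qed
    have Mcol: "col M j $ r = vs ! r $ j" if "r < N' - 1" "j < N'" for r j
      unfolding M_def using that lenv by (simp add: mat_of_rows_index)
    have indep: "lin_indep_list N' \<Lambda>"
      unfolding lin_indep_list_def
    proof (intro allI impI)
      fix c :: "nat \<Rightarrow> real" and i
      assume H0: "\<forall>k<N'. (\<Sum>i<length \<Lambda>. c i * (\<Lambda> ! i) $ k) = 0" and i: "i < length \<Lambda>"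
      have H: "\<forall>q<(n1+1)*n2. (\<Sum>l<N'-2. c l * (Q ^\<^sub>m (l+2)) $$ (0,q)) = 0"
      proof (intro allI impI)
        fix q assume q: "q < (n1+1)*n2"
        then have q': "q < N'" unfolding N'_def .
        have "(\<Sum>l<N'-2. c l * (Q ^\<^sub>m (l+2)) $$ (0,q)) = (\<Sum>l<length \<Lambda>. c l * (\<Lambda> ! l) $ q)"
          unfolding lenL by (intro sum.cong refl) (simp add: ent[OF q'] \<Lambda>_def add.commute)
        then show "(\<Sum>l<N'-2. c l * (Q ^\<^sub>m (l+2)) $$ (0,q)) = 0" using H0 q' by simp
      qed
      define R where "R = (\<Sum>l<N'-2. monom (complex_of_real (c l)) (l+2))"
      have P: "(\<Sum>l<N'-2. monom (complex_of_real (c l)) (l+2)) = monom 1 0 * R"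
        unfolding R_def by simp
      have "degree R \<le> N' - 1" unfolding R_def
        by (intro degree_sum_le) (auto intro: order_trans[OF degree_monom_le])
      then have "degree R < N'" using N0 by linarith
      then have deg: "degree R < (n1+1)*n2" unfolding N'_def .
      have "R = 0" by (rule no_relation[OF n0 m0 assms(3) H[unfolded Q_def] P _ deg]) simp
      then have "coeff R (i+2) = 0" by simp
      moreover have "coeff R (i+2) = complex_of_real (c i)" using i lenL unfolding R_def by (simp add: coeff_sum)
      ultimately show "c i = 0" by simp
    qed
    have dep: "\<not> lin_indep_list N' vs"
    proof -
      obtain c where c: "\<forall>q<N'. (\<Sum>l<N'-1. c l * vs ! l $ q) = 0" "\<exists>l<N'-1. c l \<noteq> 0"
        using dep_lemma[where F="\<lambda>l q. vs ! l $ q" and n=n2 and N=N' and p=p and w="\<lambda>k. - zv n2 \<tau> (2*k+2)"] F0 Fn b1 b2 n0 N3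
        by fastforce
      then show ?thesis unfolding lin_indep_list_def lenv by blast
    qed
    have spanb: "in_span_list (N' - 1) (col M (1 - 1)) (map (\<lambda>k. col M (2 * k + 1 - 1)) [1..<p + 1])"
      unfolding in_span_list_def
    proof (intro exI allI impI)
      fix r assume r: "r < N' - 1"
      have "col M (1 - 1) $ r = vs ! r $ 0" using Mcol[OF r, of 0] N0 by simp
      also have "\<dots> = (\<Sum>k<p. (- zv n2 \<tau> (2*k+2)) * vs ! r $ (2*k+2))" by (rule F0[OF r])
      also have "\<dots> = (\<Sum>i<length (map (\<lambda>k. col M (2 * k + 1 - 1)) [1..<p + 1]).
           (- zv n2 \<tau> (2*i+2)) * map (\<lambda>k. col M (2 * k + 1 - 1)) [1..<p + 1] ! i $ r)"
      proof (intro sum.cong)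
        fix i assume "i \<in> {..<length (map (\<lambda>k. col M (2 * k + 1 - 1)) [1..<p + 1])}"
        then have i: "i < p" by (simp del: upt_Suc)
        have "map (\<lambda>k. col M (2 * k + 1 - 1)) [1..<p + 1] ! i $ r = col M (2*i+2) $ r"
          using i by (simp add: algebra_simps del: upt_Suc)
        also have "\<dots> = vs ! r $ (2*i+2)" using Mcol[OF r] b1[OF i] N3 by simp
        finally show "(- zv n2 \<tau> (2*i+2)) * vs ! r $ (2*i+2) =
           (- zv n2 \<tau> (2*i+2)) * map (\<lambda>k. col M (2 * k + 1 - 1)) [1..<p + 1] ! i $ r" by simp
      qed (simp del: upt_Suc)
      finally show "col M (1 - 1) $ r = (\<Sum>i<length (map (\<lambda>k. col M (2 * k + 1 - 1)) [1..<p + 1]).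
           (- zv n2 \<tau> (2*i+2)) * map (\<lambda>k. col M (2 * k + 1 - 1)) [1..<p + 1] ! i $ r)" .
    qed
    have spanc: "in_span_list (N' - 1) (col M (n2 + 1 - 1)) (map (\<lambda>k. col M (n2 + 1 + 2 * k - 1)) [1..<p + 1])"
      unfolding in_span_list_def
    proof (intro exI allI impI)
      fix r assume r: "r < N' - 1"
      have "col M (n2 + 1 - 1) $ r = vs ! r $ n2" using Mcol[OF r, of n2] N3 n0 by simp
      also have "\<dots> = (\<Sum>k<p. (- zv n2 \<tau> (2*k+2)) * vs ! r $ (n2+2*k+2))" by (rule Fn[OF r])
      also have "\<dots> = (\<Sum>i<length (map (\<lambda>k. col M (n2 + 1 + 2 * k - 1)) [1..<p + 1]).
           (- zv n2 \<tau> (2*i+2)) * map (\<lambda>k. col M (n2 + 1 + 2 * k - 1)) [1..<p + 1] ! i $ r)"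
      proof (intro sum.cong)
        fix i assume "i \<in> {..<length (map (\<lambda>k. col M (n2 + 1 + 2 * k - 1)) [1..<p + 1])}"
        then have i: "i < p" by (simp del: upt_Suc)
        have "map (\<lambda>k. col M (n2 + 1 + 2 * k - 1)) [1..<p + 1] ! i $ r = col M (n2+2*i+2) $ r"
          using i by (simp add: algebra_simps del: upt_Suc)
        also have "\<dots> = vs ! r $ (n2+2*i+2)" using Mcol[OF r] b2[OF i] by simp
        finally show "(- zv n2 \<tau> (2*i+2)) * vs ! r $ (n2+2*i+2) =
           (- zv n2 \<tau> (2*i+2)) * map (\<lambda>k. col M (n2 + 1 + 2 * k - 1)) [1..<p + 1] ! i $ r" by simp
      qed (simp del: upt_Suc)
      finally show "col M (n2 + 1 - 1) $ r = (\<Sum>i<length (map (\<lambda>k. col M (n2 + 1 + 2 * k - 1)) [1..<p + 1]).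
           (- zv n2 \<tau> (2*i+2)) * map (\<lambda>k. col M (n2 + 1 + 2 * k - 1)) [1..<p + 1] ! i $ r)" .
    qed
    show "let \<Lambda> = map (\<lambda>k. e1Q Q k) [2..<N'];
            M = mat_of_rows N' (\<Lambda> @ [e1Q Q s]);
            C = (\<lambda>j::nat. col M (j - 1))
        in lin_indep_list N' \<Lambda>
           \<and> \<not> lin_indep_list N' (\<Lambda> @ [e1Q Q s])
           \<and> in_span_list (N' - 1) (C 1) (map (\<lambda>k. C (2 * k + 1)) [1..<(n2 - 1) div 2 + 1])
           \<and> in_span_list (N' - 1) (C (n2 + 1))
               (map (\<lambda>k. C (n2 + 1 + 2 * k)) [1..<(n2 - 1) div 2 + 1])"
      unfolding Let_def using indep dep spanb spanc unfolding \<Lambda>_def[symmetric] vs_def M_def p_def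
      by simp
  qed
qed


end
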